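(* Assume Assumption 1 and Assumption 2 (as defined in the context) and the null hypothesis $H_0:\ T_i(1)=T_i(0)$ for all $1\le i\le n$. Then, conditioning on all potential event times $\boldsymbol{T}(1),\boldsymbol{T}(0)$, for every time $t\ge 0$, $$\overline{D}_1(t)\mid \boldsymbol{T}(1),\boldsymbol{T}(0),\overline{N}(t),\overline{D}(t),\overline{N}_1(t)\ \sim\ \mathrm{HGeom}\big(\overline{N}(t),\overline{D}(t),\overline{N}_1(t)\big).$$
   Context: There are $n$ units. Unit $i$ has potential event times $T_i(1),T_i(0)\ge 0$ (under treatment and control), potential censoring times $C_i(1),C_i(0)\in[0,\infty]$, and treatment indicator $Z_i\in\{0,1\}$; bold letters denote the corresponding $n$-vectors. Assumption 1: conditional on $\boldsymbol{T}(1),\boldsymbol{T}(0),\boldsymbol{C}(1),\boldsymbol{C}(0)$, the $Z_i$ are i.i.d. Bernoulli$(p_1)$ with $p_1=1-p_0\in(0,1)$. Assumption 2: $(\boldsymbol{C}(1),\boldsymbol{C}(0))$ is independent of $(\boldsymbol{T}(1),\boldsymbol{T}(0))$, and the pairs $(C_i(1),C_i(0))$, $1\le i\le n$, are i.i.d. (the two components of a pair may be dependent and have different distributions). Realized quantities: $T_i=Z_iT_i(1)+(1-Z_i)T_i(0)$, $C_i=Z_iC_i(1)+(1-Z_i)C_i(0)$, $W_i=\min\{T_i,C_i\}$, $\Delta_i=\mathbb{1}(T_i\le C_i)$. For $t\ge 0$: $\overline{N}_1(t)=\sum_i Z_i\mathbb{1}(W_i\ge t)$, $\overline{N}_0(t)=\sum_i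 (1-Z_i)\mathbb{1}(W_i\ge t)$, $\overline{N}(t)=\overline{N}_1(t)+\overline{N}_0(t)$, $\overline{D}_1(t)=\sum_i Z_i\Delta_i\mathbb{1}(W_i=t)$, $\overline{D}(t)=\sum_i\Delta_i\mathbb{1}(W_i=t)$. $\mathrm{HGeom}(m,k,b)$ denotes the hypergeometric distribution of the number of successes in $b$ draws without replacement from a population of size $m$ containing exactly $k$ successes. *)

theory Defs
  imports "HOL-Probability.Probability"
begin

text \<open>Realized quantities for units 0..n-1, given potential event times T1, T0 (real),
  treatment indicators z (True = treated) and potential censoring times c1, c0 in [0,\<infinity>] (ereal).\<close>

definition realT :: "(nat \<Rightarrow> real) \<Rightarrow> (nat \<Rightarrow> real) \<Rightarrow> (nat \<Rightarrow> bool) \<Rightarrow> nat \<Rightarrow> real" where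
  "realT T1 T0 z i = (if z i then T1 i else T0 i)"

definition realC :: "(nat \<Rightarrow> ereal) \<Rightarrow> (nat \<Rightarrow> ereal) \<Rightarrow> (nat \<Rightarrow> bool) \<Rightarrow> nat \<Rightarrow> ereal" where
  "realC c1 c0 z i = (if z i then c1 i else c0 i)"

definition obsW :: "(nat \<Rightarrow> real) \<Rightarrow> (nat \<Rightarrow> real) \<Rightarrow> (nat \<Rightarrow> ereal) \<Rightarrow> (nat \<Rightarrow> ereal)
    \<Rightarrow> (nat \<Rightarrow> bool) \<Rightarrow> nat \<Rightarrow> ereal" where
  "obsW T1 T0 c1 c0 z i = min (ereal (realT T1 T0 z i)) (realC c1 c0 z i)"

definition obsDelta :: "(nat \<Rightarrow> real) \<Rightarrow> (nat \<Rightarrow> real) \<Rightarrow> (nat \<Rightarrow> ereal) \<Rightarrow> (nat \<Rightarrow> ereal)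
    \<Rightarrow> (nat \<Rightarrow> bool) \<Rightarrow> nat \<Rightarrow> bool" where
  "obsDelta T1 T0 c1 c0 z i = (ereal (realT T1 T0 z i) \<le> realC c1 c0 z i)"

definition Nbar1 :: "nat \<Rightarrow> (nat \<Rightarrow> real) \<Rightarrow> (nat \<Rightarrow> real) \<Rightarrow> (nat \<Rightarrow> ereal) \<Rightarrow> (nat \<Rightarrow> ereal)
    \<Rightarrow> (nat \<Rightarrow> bool) \<Rightarrow> real \<Rightarrow> nat" where
  "Nbar1 n T1 T0 c1 c0 z t = card {i. i < n \<and> z i \<and> ereal t \<le> obsW T1 T0 c1 c0 z i}"

definition Nbar0 :: "nat \<Rightarrow> (nat \<Rightarrow> real) \<Rightarrow> (nat \<Rightarrow> real) \<Rightarrow> (nat \<Rightarrow> ereal) \<Rightarrow> (nat \<Rightarrow> ereal)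
    \<Rightarrow> (nat \<Rightarrow> bool) \<Rightarrow> real \<Rightarrow> nat" where
  "Nbar0 n T1 T0 c1 c0 z t = card {i. i < n \<and> \<not> z i \<and> ereal t \<le> obsW T1 T0 c1 c0 z i}"

definition Nbar :: "nat \<Rightarrow> (nat \<Rightarrow> real) \<Rightarrow> (nat \<Rightarrow> real) \<Rightarrow> (nat \<Rightarrow> ereal) \<Rightarrow> (nat \<Rightarrow> ereal)
    \<Rightarrow> (nat \<Rightarrow> bool) \<Rightarrow> real \<Rightarrow> nat" where
  "Nbar n T1 T0 c1 c0 z t = Nbar1 n T1 T0 c1 c0 z t + Nbar0 n T1 T0 c1 c0 z t"

definition Dbar1 :: "nat \<Rightarrow> (nat \<Rightarrow> real) \<Rightarrow> (nat \<Rightarrow> real) \<Rightarrow> (nat \<Rightarrow> ereal) \<Rightarrow> (nat \<Rightarrow> ereal)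
    \<Rightarrow> (nat \<Rightarrow> bool) \<Rightarrow> real \<Rightarrow> nat" where
  "Dbar1 n T1 T0 c1 c0 z t =
     card {i. i < n \<and> z i \<and> obsDelta T1 T0 c1 c0 z i \<and> obsW T1 T0 c1 c0 z i = ereal t}"

definition Dbar :: "nat \<Rightarrow> (nat \<Rightarrow> real) \<Rightarrow> (nat \<Rightarrow> real) \<Rightarrow> (nat \<Rightarrow> ereal) \<Rightarrow> (nat \<Rightarrow> ereal)
    \<Rightarrow> (nat \<Rightarrow> bool) \<Rightarrow> real \<Rightarrow> nat" where
  "Dbar n T1 T0 c1 c0 z t =
     card {i. i < n \<and> obsDelta T1 T0 c1 c0 z i \<and> obsW T1 T0 c1 c0 z i = ereal t}"

definition hgeom_pmf :: "nat \<Rightarrow> nat \<Rightarrow> nat \<Rightarrow> nat \<Rightarrow> real" where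
  "hgeom_pmf m k b j =
     (if j \<le> k \<and> j \<le> b \<and> b - j \<le> m - k
      then real (k choose j) * real ((m - k) choose (b - j)) / real (m choose b) else 0)"

end

theory Submission
  imports Defs
begin

lemma cnt_split:
  assumes fin: "finite S" and jb: "j \<le> b"
  shows "card {U. U \<subseteq> S \<and> card U = b \<and> card (U \<inter> E) = j}
       = (card (S \<inter> E) choose j) * (card (S - E) choose (b - j))"
proof -
  let ?P1 = "{X. X \<subseteq> S \<inter> E \<and> card X = j}"
  let ?P2 = "{Y. Y \<subseteq> S - E \<and> card Y = b - j}"
  have eq: "{U. U \<subseteq> S \<and> card U = b \<and> card (U \<inter> E) = j} = (\<lambda>(X,Y). X \<union> Y) ` (?P1 \<times> ?P2)"
  proof (rule set_eqI, rule iffI)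
    fix U assume U: "U \<in> {U. U \<subseteq> S \<and> card U = b \<and> card (U \<inter> E) = j}"
    then have fU: "finite U" using fin finite_subset by auto
    have "card U = card (U \<inter> E) + card (U - E)"
      using fU by (metis Diff_Diff_Int card_Diff_subset_Int finite_Diff inf_le1 card_Un_disjoint Un_Diff_Int Int_Diff_disjoint card_Diff_subset finite_Int finite_Un Int_commute)
    then have "card (U - E) = b - j" using U by auto
    moreover have "U = (U \<inter> E) \<union> (U - E)" by auto
    ultimately show "U \<in> (\<lambda>(X,Y). X \<union> Y) ` (?P1 \<times> ?P2)" using U
      by (intro image_eqI[where x="(U \<inter> E, U - E)"]) auto
  next
    fix U assume "U \<in> (\<lambda>(X,Y). X \<union> Y) ` (?P1 \<times> ?P2)"
    then obtain X Y where XY: "X \<in> ?P1" "Y \<in> ?P2" "U = X \<union> Y" by auto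
    have fX: "finite X" "finite Y" using XY fin finite_subset by blast+
    have "X \<inter> Y = {}" using XY by auto
    then have "card U = card X + card Y" using XY(3) fX by (simp add: card_Un_disjoint)
    moreover have "U \<inter> E = X" using XY by auto
    ultimately show "U \<in> {U. U \<subseteq> S \<and> card U = b \<and> card (U \<inter> E) = j}" using XY jb by auto
  qed
  have inj: "inj_on (\<lambda>(X,Y). X \<union> Y) (?P1 \<times> ?P2)"
  proof (rule inj_onI)
    fix p q assume h: "p \<in> ?P1 \<times> ?P2" "q \<in> ?P1 \<times> ?P2" "(\<lambda>(X,Y). X \<union> Y) p = (\<lambda>(X,Y). X \<union> Y) q"
    obtain X Y X' Y' where pq: "p = (X,Y)" "q = (X',Y')" by fastforce
    have "X = (X \<union> Y) \<inter> E" "X' = (X' \<union> Y') \<inter> E" "Y = (X \<union> Y) - E" "Y' = (X' \<union> Y') - E"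
      using h pq by auto
    then show "p = q" using h(3) pq by auto
  qed
  have "card {U. U \<subseteq> S \<and> card U = b \<and> card (U \<inter> E) = j} = card ?P1 * card ?P2"
    using eq inj by (simp add: card_image card_cartesian_product)
  also have "\<dots> = (card (S \<inter> E) choose j) * (card (S - E) choose (b - j))"
    using fin n_subsets[of "S \<inter> E" j] n_subsets[of "S - E" "b - j"] by simp
  finally show ?thesis .
qed

lemma cnt_zero:
  assumes fin: "finite S" and jb: "\<not> j \<le> b"
  shows "card {U. U \<subseteq> S \<and> card U = b \<and> card (U \<inter> E) = j} = 0"
proof -
  have "{U. U \<subseteq> S \<and> card U = b \<and> card (U \<inter> E) = j} = {}"
  proof (safe)
    fix U assume "U \<subseteq> S" "j = card (U \<inter> E)" "b = card U"
    moreover have "card (U \<inter> E) \<le> card U" using \<open>U \<subseteq> S\<close> fin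
      by (meson card_mono finite_subset inf_le1)
    ultimately show "U \<in> {}" using jb by simp
  qed
  then show ?thesis by (metis card.empty)
qed


definition mixset :: "(ereal \<times> ereal) set \<Rightarrow> (ereal \<times> ereal) set \<Rightarrow> (bool \<times> ereal \<times> ereal) set" where
  "mixset B1 B0 = {True} \<times> B1 \<union> {False} \<times> B0"

locale thm_setup = prob_space M for M :: "'a measure" +
  fixes n :: nat and p1 :: real and T1 T0 :: "nat \<Rightarrow> real"
    and Z :: "nat \<Rightarrow> 'a \<Rightarrow> bool" and C1 C0 :: "nat \<Rightarrow> 'a \<Rightarrow> ereal" and t :: real
  assumes H0: "\<forall>i<n. T1 i = T0 i"
    and indep_units: "indep_vars (\<lambda>_. count_space UNIV \<Otimes>\<^sub>M (borel \<Otimes>\<^sub>M borel))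
                        (\<lambda>i \<omega>. (Z i \<omega>, (C1 i \<omega>, C0 i \<omega>))) {..<n}"
    and indep_Z_C: "\<forall>i<n. \<forall>A \<in> sets (borel \<Otimes>\<^sub>M borel).
                        measure M {\<omega> \<in> space M. Z i \<omega> \<and> (C1 i \<omega>, C0 i \<omega>) \<in> A}
                        = measure M {\<omega> \<in> space M. Z i \<omega>} * measure M {\<omega> \<in> space M. (C1 i \<omega>, C0 i \<omega>) \<in> A}"
    and Z_bernoulli: "\<forall>i<n. measure M {\<omega> \<in> space M. Z i \<omega>} = p1"
    and C_ident: "\<forall>i<n. distr M (borel \<Otimes>\<^sub>M borel) (\<lambda>\<omega>. (C1 i \<omega>, C0 i \<omega>))
                       = distr M (borel \<Otimes>\<^sub>M borel) (\<lambda>\<omega>. (C1 0 \<omega>, C0 0 \<omega>))"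
begin

definition Y where "Y i \<omega> = (Z i \<omega>, (C1 i \<omega>, C0 i \<omega>))"
definition mu0 where "mu0 B = measure M {\<omega> \<in> space M. (C1 0 \<omega>, C0 0 \<omega>) \<in> B}"

lemma Y_meas: "i < n \<Longrightarrow> Y i \<in> measurable M (count_space UNIV \<Otimes>\<^sub>M (borel \<Otimes>\<^sub>M borel))"
  using indep_units unfolding indep_vars_def2 Y_def by auto

lemma C_meas: "i < n \<Longrightarrow> (\<lambda>\<omega>. (C1 i \<omega>, C0 i \<omega>)) \<in> measurable M (borel \<Otimes>\<^sub>M borel)"
proof -
  assume i: "i < n"
  have "(\<lambda>\<omega>. snd (Y i \<omega>)) \<in> measurable M (borel \<Otimes>\<^sub>M borel)"
    using measurable_compose[OF Y_meas[OF i] measurable_snd] by (simp add: comp_def)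
  then show ?thesis by (simp add: Y_def)
qed

lemma Y_sets: "i < n \<Longrightarrow> Q \<in> sets (count_space UNIV \<Otimes>\<^sub>M (borel \<Otimes>\<^sub>M borel)) \<Longrightarrow>
   {\<omega> \<in> space M. Y i \<omega> \<in> Q} \<in> events"
proof -
  assume i: "i < n" and Q: "Q \<in> sets (count_space UNIV \<Otimes>\<^sub>M (borel \<Otimes>\<^sub>M borel))"
  have "Y i -` Q \<inter> space M \<in> events" using measurable_sets[OF Y_meas[OF i] Q] .
  moreover have "{\<omega> \<in> space M. Y i \<omega> \<in> Q} = Y i -` Q \<inter> space M" by auto
  ultimately show ?thesis by simp
qed

lemma mixset_sets: "B1 \<in> sets (borel \<Otimes>\<^sub>M borel) \<Longrightarrow> B0 \<in> sets (borel \<Otimes>\<^sub>M borel) \<Longrightarrow>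
   mixset B1 B0 \<in> sets (count_space UNIV \<Otimes>\<^sub>M (borel \<Otimes>\<^sub>M borel))"
  unfolding mixset_def by (intro sets.Un pair_measureI) auto

lemma C_same: assumes i: "i < n" and B: "B \<in> sets (borel \<Otimes>\<^sub>M borel)"
  shows "measure M {\<omega> \<in> space M. (C1 i \<omega>, C0 i \<omega>) \<in> B} = mu0 B"
proof -
  have i0: "0 < n" using i by simp
  have s1: "{\<omega> \<in> space M. (C1 i \<omega>, C0 i \<omega>) \<in> B} = (\<lambda>\<omega>. (C1 i \<omega>, C0 i \<omega>)) -` B \<inter> space M" by blast
  have s0: "{\<omega> \<in> space M. (C1 0 \<omega>, C0 0 \<omega>) \<in> B} = (\<lambda>\<omega>. (C1 0 \<omega>, C0 0 \<omega>)) -` B \<inter> space M" by blast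
  have d: "distr M (borel \<Otimes>\<^sub>M borel) (\<lambda>\<omega>. (C1 i \<omega>, C0 i \<omega>))
                       = distr M (borel \<Otimes>\<^sub>M borel) (\<lambda>\<omega>. (C1 0 \<omega>, C0 0 \<omega>))"
    using C_ident i by blast
  show ?thesis
    unfolding mu0_def s1 s0
    using measure_distr[OF C_meas[OF i] B] measure_distr[OF C_meas[OF i0] B] d by metis
qed

lemma unit_prob:
  assumes i: "i < n" and B1: "B1 \<in> sets (borel \<Otimes>\<^sub>M borel)" and B0: "B0 \<in> sets (borel \<Otimes>\<^sub>M borel)"
  shows "prob {\<omega> \<in> space M. Y i \<omega> \<in> mixset B1 B0} = p1 * mu0 B1 + (1 - p1) * mu0 B0"
proof -
  have ev: "{\<omega> \<in> space M. Y i \<omega> \<in> Q} \<in> events" if "Q \<in> sets (count_space UNIV \<Otimes>\<^sub>M (borel \<Otimes>\<^sub>M borel))" for Q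
    using Y_sets[OF i that] .
  have e1: "{\<omega> \<in> space M. Z i \<omega> \<and> (C1 i \<omega>, C0 i \<omega>) \<in> B1} \<in> events"
    using ev[of "{True} \<times> B1"] B1 by (simp add: Y_def)
  have e0: "{\<omega> \<in> space M. \<not> Z i \<omega> \<and> (C1 i \<omega>, C0 i \<omega>) \<in> B0} \<in> events"
    using ev[of "{False} \<times> B0"] B0 by (simp add: Y_def)
  have e0': "{\<omega> \<in> space M. Z i \<omega> \<and> (C1 i \<omega>, C0 i \<omega>) \<in> B0} \<in> events"
    using ev[of "{True} \<times> B0"] B0 by (simp add: Y_def)
  have "{\<omega> \<in> space M. Y i \<omega> \<in> mixset B1 B0} =
      {\<omega> \<in> space M. Z i \<omega> \<and> (C1 i \<omega>, C0 i \<omega>) \<in> B1} \<union> {\<omega> \<in> space M. \<not> Z i \<omega> \<and> (C1 i \<omega>, C0 i \<omega>) \<in> B0}"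
    by (auto simp: Y_def mixset_def)
  then have "prob {\<omega> \<in> space M. Y i \<omega> \<in> mixset B1 B0} =
      prob {\<omega> \<in> space M. Z i \<omega> \<and> (C1 i \<omega>, C0 i \<omega>) \<in> B1} + prob {\<omega> \<in> space M. \<not> Z i \<omega> \<and> (C1 i \<omega>, C0 i \<omega>) \<in> B0}"
    using finite_measure_Union[OF e1 e0] by auto
  moreover have "prob {\<omega> \<in> space M. (C1 i \<omega>, C0 i \<omega>) \<in> B0} =
      prob {\<omega> \<in> space M. Z i \<omega> \<and> (C1 i \<omega>, C0 i \<omega>) \<in> B0} + prob {\<omega> \<in> space M. \<not> Z i \<omega> \<and> (C1 i \<omega>, C0 i \<omega>) \<in> B0}"
  proof -
    have "{\<omega> \<in> space M. (C1 i \<omega>, C0 i \<omega>) \<in> B0} = {\<omega> \<in> space M. Z i \<omega> \<and> (C1 i \<omega>, C0 i \<omega>) \<in> B0} \<union> {\<omega> \<in> space M. \<not> Z i \<omega> \<and> (C1 i \<omega>, C0 i \<omega>) \<in> B0}"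
      by auto
    then show ?thesis using finite_measure_Union[OF e0' e0] by auto
  qed
  moreover have "prob {\<omega> \<in> space M. Z i \<omega> \<and> (C1 i \<omega>, C0 i \<omega>) \<in> B1} = p1 * mu0 B1"
    using indep_Z_C Z_bernoulli i B1 C_same[OF i B1] by simp
  moreover have "prob {\<omega> \<in> space M. Z i \<omega> \<and> (C1 i \<omega>, C0 i \<omega>) \<in> B0} = p1 * mu0 B0"
    using indep_Z_C Z_bernoulli i B0 C_same[OF i B0] by simp
  ultimately show ?thesis
    using C_same[OF i B0] by (simp add: algebra_simps)
qed


lemma indep_prod:
  assumes Q: "\<And>i. i < n \<Longrightarrow> Q i \<in> sets (count_space UNIV \<Otimes>\<^sub>M (borel \<Otimes>\<^sub>M borel))"
  shows "prob {\<omega> \<in> space M. \<forall>i<n. Y i \<omega> \<in> Q i} = (\<Prod>i<n. prob {\<omega> \<in> space M. Y i \<omega> \<in> Q i})"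
proof (cases "n = 0")
  case True
  then show ?thesis by (simp add: prob_space)
next
  case False
  have ind: "indep_sets (\<lambda>i. {Y i -` A \<inter> space M | A. A \<in> sets (count_space UNIV \<Otimes>\<^sub>M (borel \<Otimes>\<^sub>M borel))}) {..<n}"
    using indep_units unfolding indep_vars_def2 Y_def[abs_def] by simp
  have mem: "(\<lambda>j. Y j -` Q j \<inter> space M) \<in> Pi {..<n} (\<lambda>i. {Y i -` A \<inter> space M | A. A \<in> sets (count_space UNIV \<Otimes>\<^sub>M (borel \<Otimes>\<^sub>M borel))})"
    using Q by auto
  have "prob (\<Inter>j\<in>{..<n}. Y j -` Q j \<inter> space M) = (\<Prod>j\<in>{..<n}. prob (Y j -` Q j \<inter> space M))"
    using ind False mem unfolding indep_sets_def by blast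
  moreover have "(\<Inter>j\<in>{..<n}. Y j -` Q j \<inter> space M) = {\<omega> \<in> space M. \<forall>i<n. Y i \<omega> \<in> Q i}"
    using False by auto
  moreover have "\<And>j. Y j -` Q j \<inter> space M = {\<omega> \<in> space M. Y j \<omega> \<in> Q j}" by auto
  ultimately show ?thesis by simp
qed


definition Sw where "Sw \<omega> = {i. i < n \<and> ereal t \<le> obsW T1 T0 (\<lambda>i. C1 i \<omega>) (\<lambda>i. C0 i \<omega>) (\<lambda>i. Z i \<omega>) i}"
definition Uw where "Uw \<omega> = {i. i < n \<and> Z i \<omega> \<and> ereal t \<le> obsW T1 T0 (\<lambda>i. C1 i \<omega>) (\<lambda>i. C0 i \<omega>) (\<lambda>i. Z i \<omega>) i}"
definition Ev where "Ev = {i. i < n \<and> T1 i = t}"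
definition Aset where "Aset = {i. i < n \<and> t \<le> T1 i}"

lemma W_iff: "i < n \<Longrightarrow> (ereal t \<le> obsW T1 T0 (\<lambda>i. C1 i \<omega>) (\<lambda>i. C0 i \<omega>) (\<lambda>i. Z i \<omega>) i)
   \<longleftrightarrow> (t \<le> T1 i \<and> ereal t \<le> (if Z i \<omega> then C1 i \<omega> else C0 i \<omega>))"
  using H0 by (auto simp: obsW_def realT_def realC_def)

lemma D_iff: "i < n \<Longrightarrow> (obsDelta T1 T0 (\<lambda>i. C1 i \<omega>) (\<lambda>i. C0 i \<omega>) (\<lambda>i. Z i \<omega>) i
     \<and> obsW T1 T0 (\<lambda>i. C1 i \<omega>) (\<lambda>i. C0 i \<omega>) (\<lambda>i. Z i \<omega>) i = ereal t)
   \<longleftrightarrow> (T1 i = t \<and> ereal t \<le> (if Z i \<omega> then C1 i \<omega> else C0 i \<omega>))"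
  using H0 by (auto simp: obsW_def obsDelta_def realT_def realC_def min_def)

lemma Nbar1_eq: "Nbar1 n T1 T0 (\<lambda>i. C1 i \<omega>) (\<lambda>i. C0 i \<omega>) (\<lambda>i. Z i \<omega>) t = card (Uw \<omega>)"
  by (simp add: Nbar1_def Uw_def)

lemma Nbar_eq: "Nbar n T1 T0 (\<lambda>i. C1 i \<omega>) (\<lambda>i. C0 i \<omega>) (\<lambda>i. Z i \<omega>) t = card (Sw \<omega>)"
proof -
  have "Sw \<omega> = Uw \<omega> \<union> {i. i < n \<and> \<not> Z i \<omega> \<and> ereal t \<le> obsW T1 T0 (\<lambda>i. C1 i \<omega>) (\<lambda>i. C0 i \<omega>) (\<lambda>i. Z i \<omega>) i}"
    by (auto simp: Sw_def Uw_def)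
  moreover have "Uw \<omega> \<inter> {i. i < n \<and> \<not> Z i \<omega> \<and> ereal t \<le> obsW T1 T0 (\<lambda>i. C1 i \<omega>) (\<lambda>i. C0 i \<omega>) (\<lambda>i. Z i \<omega>) i} = {}"
    by (auto simp: Uw_def)
  moreover have "finite (Uw \<omega>)" by (simp add: Uw_def)
  ultimately show ?thesis
    by (simp add: Nbar_def Nbar1_def Nbar0_def Uw_def card_Un_disjoint)
qed

lemma Dbar_eq: "Dbar n T1 T0 (\<lambda>i. C1 i \<omega>) (\<lambda>i. C0 i \<omega>) (\<lambda>i. Z i \<omega>) t = card (Sw \<omega> \<inter> Ev)"
proof -
  have "{i. i < n \<and> obsDelta T1 T0 (\<lambda>i. C1 i \<omega>) (\<lambda>i. C0 i \<omega>) (\<lambda>i. Z i \<omega>) i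
     \<and> obsW T1 T0 (\<lambda>i. C1 i \<omega>) (\<lambda>i. C0 i \<omega>) (\<lambda>i. Z i \<omega>) i = ereal t} = Sw \<omega> \<inter> Ev"
    unfolding Sw_def Ev_def using D_iff W_iff by auto
  then show ?thesis by (simp add: Dbar_def)
qed

lemma Dbar1_eq: "Dbar1 n T1 T0 (\<lambda>i. C1 i \<omega>) (\<lambda>i. C0 i \<omega>) (\<lambda>i. Z i \<omega>) t = card (Uw \<omega> \<inter> Ev)"
proof -
  have "{i. i < n \<and> Z i \<omega> \<and> obsDelta T1 T0 (\<lambda>i. C1 i \<omega>) (\<lambda>i. C0 i \<omega>) (\<lambda>i. Z i \<omega>) i
     \<and> obsW T1 T0 (\<lambda>i. C1 i \<omega>) (\<lambda>i. C0 i \<omega>) (\<lambda>i. Z i \<omega>) i = ereal t} = Uw \<omega> \<inter> Ev"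
    unfolding Uw_def Ev_def using D_iff W_iff by auto
  then show ?thesis by (simp add: Dbar1_def)
qed

lemma Sw_sub: "Sw \<omega> \<subseteq> Aset" unfolding Sw_def Aset_def using W_iff by auto
lemma Uw_sub: "Uw \<omega> \<subseteq> Sw \<omega>" unfolding Sw_def Uw_def by auto

definition A1 where "A1 s u a = {c :: ereal \<times> ereal. (s \<longleftrightarrow> a \<and> ereal t \<le> fst c) \<and> (u \<longleftrightarrow> a \<and> ereal t \<le> fst c)}"
definition A0 where "A0 s u a = {c :: ereal \<times> ereal. (s \<longleftrightarrow> a \<and> ereal t \<le> snd c) \<and> \<not> u}"
definition gfun where "gfun s u a = p1 * mu0 (A1 s u a) + (1 - p1) * mu0 (A0 s u a)"

lemma A1_sets: "A1 s u a \<in> sets (borel \<Otimes>\<^sub>M borel)"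
proof -
  have "Measurable.pred (borel \<Otimes>\<^sub>M borel) (\<lambda>c :: ereal \<times> ereal. (s \<longleftrightarrow> a \<and> ereal t \<le> fst c) \<and> (u \<longleftrightarrow> a \<and> ereal t \<le> fst c))"
    by measurable
  then show ?thesis unfolding A1_def pred_def by (simp add: space_pair_measure)
qed

lemma A0_sets: "A0 s u a \<in> sets (borel \<Otimes>\<^sub>M borel)"
proof -
  have "Measurable.pred (borel \<Otimes>\<^sub>M borel) (\<lambda>c :: ereal \<times> ereal. (s \<longleftrightarrow> a \<and> ereal t \<le> snd c) \<and> \<not> u)"
    by measurable
  then show ?thesis unfolding A0_def pred_def by (simp add: space_pair_measure)
qed

lemma Y_mix_iff: "i < n \<Longrightarrow> Y i \<omega> \<in> mixset (A1 (i \<in> S) (i \<in> U) (i \<in> Aset)) (A0 (i \<in> S) (i \<in> U) (i \<in> Aset))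
   \<longleftrightarrow> ((i \<in> S \<longleftrightarrow> i \<in> Sw \<omega>) \<and> (i \<in> U \<longleftrightarrow> i \<in> Uw \<omega>))"
  using W_iff[of i \<omega>] by (auto simp: Y_def mixset_def A1_def A0_def Sw_def Uw_def Aset_def)

definition E where "E S U = {\<omega> \<in> space M. Sw \<omega> = S \<and> Uw \<omega> = U}"

lemma E_eq: assumes "S \<subseteq> {..<n}" "U \<subseteq> {..<n}"
  shows "E S U = {\<omega> \<in> space M. \<forall>i<n. Y i \<omega> \<in> mixset (A1 (i \<in> S) (i \<in> U) (i \<in> Aset)) (A0 (i \<in> S) (i \<in> U) (i \<in> Aset))}"
proof -
  have "Sw \<omega> = S \<and> Uw \<omega> = U \<longleftrightarrow> (\<forall>i<n. (i \<in> S \<longleftrightarrow> i \<in> Sw \<omega>) \<and> (i \<in> U \<longleftrightarrow> i \<in> Uw \<omega>))" for \<omega>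
  proof -
    have "Sw \<omega> \<subseteq> {..<n}" "Uw \<omega> \<subseteq> {..<n}" by (auto simp: Sw_def Uw_def)
    then show ?thesis using assms by blast
  qed
  then show ?thesis unfolding E_def using Y_mix_iff by auto
qed

lemma E_events: "S \<subseteq> {..<n} \<Longrightarrow> U \<subseteq> {..<n} \<Longrightarrow> E S U \<in> events"
proof -
  assume a: "S \<subseteq> {..<n}" "U \<subseteq> {..<n}"
  have "{\<omega> \<in> space M. \<forall>i<n. Y i \<omega> \<in> mixset (A1 (i \<in> S) (i \<in> U) (i \<in> Aset)) (A0 (i \<in> S) (i \<in> U) (i \<in> Aset))}
     = {\<omega> \<in> space M. \<forall>i\<in>{..<n}. Y i \<omega> \<in> mixset (A1 (i \<in> S) (i \<in> U) (i \<in> Aset)) (A0 (i \<in> S) (i \<in> U) (i \<in> Aset))}"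
    by auto
  moreover have "{\<omega> \<in> space M. \<forall>i\<in>{..<n}. Y i \<omega> \<in> mixset (A1 (i \<in> S) (i \<in> U) (i \<in> Aset)) (A0 (i \<in> S) (i \<in> U) (i \<in> Aset))} \<in> events"
    by (intro sets.sets_Collect_finite_All Y_sets mixset_sets A1_sets A0_sets) auto
  ultimately show ?thesis using E_eq[OF a] by simp
qed

lemma E_prob: assumes "S \<subseteq> {..<n}" "U \<subseteq> {..<n}"
  shows "prob (E S U) = (\<Prod>i<n. gfun (i \<in> S) (i \<in> U) (i \<in> Aset))"
  unfolding E_eq[OF assms] gfun_def
  by (subst indep_prod) (auto intro!: prod.cong mixset_sets A1_sets A0_sets unit_prob)


definition Fv where "Fv m b = gfun True True True ^ b * gfun True False True ^ (m - b)
   * gfun False False True ^ (card Aset - m) * gfun False False False ^ (n - card Aset)"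

lemma prod_decomp: assumes US: "U \<subseteq> S" and SA: "S \<subseteq> Aset"
  shows "(\<Prod>i<n. gfun (i \<in> S) (i \<in> U) (i \<in> Aset)) = Fv (card S) (card U)"
proof -
  let ?h = "\<lambda>i. gfun (i \<in> S) (i \<in> U) (i \<in> Aset)"
  have An: "Aset \<subseteq> {..<n}" by (auto simp: Aset_def)
  have fA: "finite Aset" using An finite_subset by blast
  have fS: "finite S" using SA fA finite_subset by blast
  have fU: "finite U" using US fS finite_subset by blast
  have "prod ?h {..<n} = prod ?h ({..<n} - Aset) * prod ?h Aset" by (rule prod.subset_diff[OF An]) simp
  also have "prod ?h Aset = prod ?h (Aset - S) * prod ?h S" by (rule prod.subset_diff[OF SA fA])
  also have "prod ?h S = prod ?h (S - U) * prod ?h U" by (rule prod.subset_diff[OF US fS])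
  also have "prod ?h U = gfun True True True ^ card U"
  proof -
    have "\<forall>i\<in>U. i \<in> S \<and> i \<in> Aset" using US SA by blast
    then have "prod ?h U = prod (\<lambda>_. gfun True True True) U" by (intro prod.cong) auto
    then show ?thesis by simp
  qed
  also have "prod ?h (S - U) = gfun True False True ^ (card S - card U)"
  proof -
    have "\<forall>i\<in>S - U. i \<in> S \<and> i \<notin> U \<and> i \<in> Aset" using US SA by blast
    then have "prod ?h (S - U) = prod (\<lambda>_. gfun True False True) (S - U)" by (intro prod.cong) auto
    then show ?thesis using US fU by (simp add: card_Diff_subset)
  qed
  also have "prod ?h (Aset - S) = gfun False False True ^ (card Aset - card S)"
  proof -
    have "\<forall>i\<in>Aset - S. i \<notin> S \<and> i \<notin> U \<and> i \<in> Aset" using US SA by blast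
    then have "prod ?h (Aset - S) = prod (\<lambda>_. gfun False False True) (Aset - S)" by (intro prod.cong) auto
    then show ?thesis using SA fS by (simp add: card_Diff_subset)
  qed
  also have "prod ?h ({..<n} - Aset) = gfun False False False ^ (n - card Aset)"
  proof -
    have "\<forall>i\<in>{..<n} - Aset. i \<notin> S \<and> i \<notin> U \<and> i \<notin> Aset" using US SA by blast
    then have "prod ?h ({..<n} - Aset) = prod (\<lambda>_. gfun False False False) ({..<n} - Aset)" by (intro prod.cong) auto
    then show ?thesis using An fA by (simp add: card_Diff_subset)
  qed
  finally show ?thesis by (simp add: Fv_def mult_ac)
qed

lemma sum_lemma: assumes G: "G \<subseteq> Pow Aset \<times> Pow Aset"
  shows "prob {\<omega> \<in> space M. (Sw \<omega>, Uw \<omega>) \<in> G} = (\<Sum>p\<in>G. prob (E (fst p) (snd p)))"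
proof -
  have An: "Aset \<subseteq> {..<n}" by (auto simp: Aset_def)
  have fG: "finite G" using G An by (meson finite_Pow_iff finite_SigmaI finite_lessThan finite_subset)
  have "{\<omega> \<in> space M. (Sw \<omega>, Uw \<omega>) \<in> G} = (\<Union>p\<in>G. E (fst p) (snd p))"
    by (auto simp: E_def)
  moreover have "(\<lambda>p. E (fst p) (snd p)) ` G \<subseteq> events"
  proof (rule image_subsetI)
    fix p assume "p \<in> G"
    then have "p \<in> Pow Aset \<times> Pow Aset" using G by blast
    then have "fst p \<subseteq> {..<n}" "snd p \<subseteq> {..<n}" using An by auto
    then show "E (fst p) (snd p) \<in> events" by (rule E_events)
  qed
  moreover have "disjoint_family_on (\<lambda>p. E (fst p) (snd p)) G"
    by (auto simp: disjoint_family_on_def E_def prod_eq_iff)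
  ultimately show ?thesis using finite_measure_finite_Union[OF fG] by simp
qed

lemma sum_const: assumes G: "G \<subseteq> {(S, U). S \<subseteq> Aset \<and> U \<subseteq> S \<and> card S = m \<and> card U = b}"
  shows "prob {\<omega> \<in> space M. (Sw \<omega>, Uw \<omega>) \<in> G} = real (card G) * Fv m b"
proof -
  have An: "Aset \<subseteq> {..<n}" by (auto simp: Aset_def)
  have G': "G \<subseteq> Pow Aset \<times> Pow Aset"
  proof
    fix p assume p: "p \<in> G"
    obtain S U where pSU: "p = (S, U)" by fastforce
    have "S \<subseteq> Aset \<and> U \<subseteq> S" using G p unfolding pSU by blast
    then show "p \<in> Pow Aset \<times> Pow Aset" unfolding pSU by auto
  qed
  have "(\<Sum>p\<in>G. prob (E (fst p) (snd p))) = (\<Sum>p\<in>G. Fv m b)"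
  proof (rule sum.cong[OF refl])
    fix p assume p: "p \<in> G"
    obtain S U where pSU: "p = (S, U)" by fastforce
    have "S \<subseteq> Aset \<and> U \<subseteq> S \<and> card S = m \<and> card U = b" using G p unfolding pSU by blast
    then have h: "fst p \<subseteq> Aset" "snd p \<subseteq> fst p" "card (fst p) = m" "card (snd p) = b" unfolding pSU by auto
    then show "prob (E (fst p) (snd p)) = Fv m b"
      using E_prob[of "fst p" "snd p"] prod_decomp[of "snd p" "fst p"] An by auto
  qed
  then show ?thesis using sum_lemma[OF G'] by simp
qed


lemma main:
  fixes m k b j :: nat
  assumes pos: "\<P>(\<omega> in M. Nbar n T1 T0 (\<lambda>i. C1 i \<omega>) (\<lambda>i. C0 i \<omega>) (\<lambda>i. Z i \<omega>) t = m
                   \<and> Dbar n T1 T0 (\<lambda>i. C1 i \<omega>) (\<lambda>i. C0 i \<omega>) (\<lambda>i. Z i \<omega>) t = k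
                   \<and> Nbar1 n T1 T0 (\<lambda>i. C1 i \<omega>) (\<lambda>i. C0 i \<omega>) (\<lambda>i. Z i \<omega>) t = b) > 0"
  shows "\<P>(\<omega> in M. Dbar1 n T1 T0 (\<lambda>i. C1 i \<omega>) (\<lambda>i. C0 i \<omega>) (\<lambda>i. Z i \<omega>) t = j
                 \<bar> Nbar n T1 T0 (\<lambda>i. C1 i \<omega>) (\<lambda>i. C0 i \<omega>) (\<lambda>i. Z i \<omega>) t = m
                   \<and> Dbar n T1 T0 (\<lambda>i. C1 i \<omega>) (\<lambda>i. C0 i \<omega>) (\<lambda>i. Z i \<omega>) t = k
                   \<and> Nbar1 n T1 T0 (\<lambda>i. C1 i \<omega>) (\<lambda>i. C0 i \<omega>) (\<lambda>i. Z i \<omega>) t = b)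
           = hgeom_pmf m k b j"
proof -
  define SS where "SS = {S. S \<subseteq> Aset \<and> card S = m \<and> card (S \<inter> Ev) = k}"
  define Gc where "Gc = Sigma SS (\<lambda>S. {U. U \<subseteq> S \<and> card U = b})"
  define Gj where "Gj = Sigma SS (\<lambda>S. {U. U \<subseteq> S \<and> card U = b \<and> card (U \<inter> Ev) = j})"
  define cntv where "cntv = (if j \<le> b then (k choose j) * ((m - k) choose (b - j)) else 0)"
  have An: "Aset \<subseteq> {..<n}" by (auto simp: Aset_def)
  have fA: "finite Aset" using An finite_subset by blast
  have "SS \<subseteq> Pow Aset" by (auto simp: SS_def)
  then have fSS: "finite SS" using fA by (meson finite_Pow_iff finite_subset)
  have ec: "{\<omega> \<in> space M. Nbar n T1 T0 (\<lambda>i. C1 i \<omega>) (\<lambda>i. C0 i \<omega>) (\<lambda>i. Z i \<omega>) t = m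
                   \<and> Dbar n T1 T0 (\<lambda>i. C1 i \<omega>) (\<lambda>i. C0 i \<omega>) (\<lambda>i. Z i \<omega>) t = k
                   \<and> Nbar1 n T1 T0 (\<lambda>i. C1 i \<omega>) (\<lambda>i. C0 i \<omega>) (\<lambda>i. Z i \<omega>) t = b}
        = {\<omega> \<in> space M. (Sw \<omega>, Uw \<omega>) \<in> Gc}"
    using Sw_sub Uw_sub by (auto simp: Nbar_eq Dbar_eq Nbar1_eq Gc_def SS_def)
  have ej: "{\<omega> \<in> space M. Dbar1 n T1 T0 (\<lambda>i. C1 i \<omega>) (\<lambda>i. C0 i \<omega>) (\<lambda>i. Z i \<omega>) t = j \<and>
                   (Nbar n T1 T0 (\<lambda>i. C1 i \<omega>) (\<lambda>i. C0 i \<omega>) (\<lambda>i. Z i \<omega>) t = m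
                   \<and> Dbar n T1 T0 (\<lambda>i. C1 i \<omega>) (\<lambda>i. C0 i \<omega>) (\<lambda>i. Z i \<omega>) t = k
                   \<and> Nbar1 n T1 T0 (\<lambda>i. C1 i \<omega>) (\<lambda>i. C0 i \<omega>) (\<lambda>i. Z i \<omega>) t = b)}
        = {\<omega> \<in> space M. (Sw \<omega>, Uw \<omega>) \<in> Gj}"
    using Sw_sub Uw_sub by (auto simp: Nbar_eq Dbar_eq Nbar1_eq Dbar1_eq Gj_def SS_def)
  have pc: "prob {\<omega> \<in> space M. (Sw \<omega>, Uw \<omega>) \<in> Gc} = real (card Gc) * Fv m b"
    by (rule sum_const) (auto simp: Gc_def SS_def)
  have pj: "prob {\<omega> \<in> space M. (Sw \<omega>, Uw \<omega>) \<in> Gj} = real (card Gj) * Fv m b"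
    by (rule sum_const) (auto simp: Gj_def SS_def)
  have fS: "S \<in> SS \<Longrightarrow> finite S" for S
  proof -
    assume "S \<in> SS"
    then have "S \<subseteq> Aset" by (simp add: SS_def)
    then show "finite S" using fA by (rule finite_subset)
  qed
  have cardS: "S \<in> SS \<Longrightarrow> card S = m" for S by (simp add: SS_def)
  have fP: "finite {U. U \<subseteq> S \<and> P U}" if "S \<in> SS" for S P
  proof -
    have "{U. U \<subseteq> S \<and> P U} \<subseteq> Pow S" by blast
    then show ?thesis using fS[OF that] by (meson finite_Pow_iff finite_subset)
  qed
  have cGc: "card Gc = card SS * (m choose b)"
  proof -
    have "card Gc = (\<Sum>S\<in>SS. card {U. U \<subseteq> S \<and> card U = b})"
      unfolding Gc_def using fP[of _ "\<lambda>U. card U = b"] by (intro card_SigmaI[OF fSS]) simp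
    also have "\<dots> = (\<Sum>S\<in>SS. m choose b)"
    proof (rule sum.cong[OF refl])
      fix S assume S: "S \<in> SS"
      show "card {U. U \<subseteq> S \<and> card U = b} = m choose b"
        using n_subsets[OF fS[OF S], of b] cardS[OF S] by simp
    qed
    finally show ?thesis by simp
  qed
  have cGj: "card Gj = card SS * cntv"
  proof -
    have "card Gj = (\<Sum>S\<in>SS. card {U. U \<subseteq> S \<and> card U = b \<and> card (U \<inter> Ev) = j})"
      unfolding Gj_def using fP[of _ "\<lambda>U. card U = b \<and> card (U \<inter> Ev) = j"] by (intro card_SigmaI[OF fSS]) simp
    also have "\<dots> = (\<Sum>S\<in>SS. cntv)"
    proof (intro sum.cong refl)
      fix S assume S: "S \<in> SS"
      have fSE: "finite (S \<inter> Ev)" using fS[OF S] by simp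
      have cd: "card (S - Ev) = m - k" using card_Diff_subset_Int[OF fSE] S by (simp add: SS_def)
      show "card {U. U \<subseteq> S \<and> card U = b \<and> card (U \<inter> Ev) = j} = cntv"
      proof (cases "j \<le> b")
        case True
        then show ?thesis using cnt_split[OF fS[OF S] True, of Ev] cd S by (simp add: cntv_def SS_def)
      next
        case False
        then show ?thesis using cnt_zero[OF fS[OF S] False, of Ev] by (simp add: cntv_def)
      qed
    qed
    finally show ?thesis by simp
  qed
  have den: "real (card SS) * real (m choose b) * Fv m b > 0"
    using pos ec pc cGc by simp
  have nz1: "real (card SS) * Fv m b \<noteq> 0"
  proof
    assume "real (card SS) * Fv m b = 0"
    then have "real (card SS) * real (m choose b) * Fv m b = 0" by (metis mult.commute mult.left_commute mult_zero_right)
    then show False using den by linarith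
  qed
  have nz2: "real (m choose b) \<noteq> 0"
  proof
    assume h: "real (m choose b) = 0"
    have "real (card SS) * real (m choose b) * Fv m b = 0" unfolding h by simp
    then show False using den by linarith
  qed
  have "\<P>(\<omega> in M. Dbar1 n T1 T0 (\<lambda>i. C1 i \<omega>) (\<lambda>i. C0 i \<omega>) (\<lambda>i. Z i \<omega>) t = j
                 \<bar> Nbar n T1 T0 (\<lambda>i. C1 i \<omega>) (\<lambda>i. C0 i \<omega>) (\<lambda>i. Z i \<omega>) t = m
                   \<and> Dbar n T1 T0 (\<lambda>i. C1 i \<omega>) (\<lambda>i. C0 i \<omega>) (\<lambda>i. Z i \<omega>) t = k
                   \<and> Nbar1 n T1 T0 (\<lambda>i. C1 i \<omega>) (\<lambda>i. C0 i \<omega>) (\<lambda>i. Z i \<omega>) t = b)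
      = (real (card SS) * Fv m b * real cntv) / (real (card SS) * Fv m b * real (m choose b))"
    unfolding cond_prob_def ec ej pc pj cGc cGj by (simp add: mult_ac)
  also have "\<dots> = real cntv / real (m choose b)" using nz1 nz2 by simp
  also have "\<dots> = hgeom_pmf m k b j"
    unfolding hgeom_pmf_def cntv_def by auto
  finally show ?thesis .
qed

end

theorem theorem1:
  fixes M :: "'a measure" and n :: nat and p1 :: real
    and T1 T0 :: "nat \<Rightarrow> real"
    and Z :: "nat \<Rightarrow> 'a \<Rightarrow> bool"
    and C1 C0 :: "nat \<Rightarrow> 'a \<Rightarrow> ereal"
  assumes M: "prob_space M"
    and p1: "0 < p1" "p1 < 1"
    and T_nonneg: "\<forall>i<n. 0 \<le> T1 i \<and> 0 \<le> T0 i"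
    and H0: "\<forall>i<n. T1 i = T0 i"
    and C_nonneg: "\<forall>i<n. \<forall>\<omega>\<in>space M. 0 \<le> C1 i \<omega> \<and> 0 \<le> C0 i \<omega>"
    and indep_units: "prob_space.indep_vars M (\<lambda>_. count_space UNIV \<Otimes>\<^sub>M (borel \<Otimes>\<^sub>M borel))
                        (\<lambda>i \<omega>. (Z i \<omega>, (C1 i \<omega>, C0 i \<omega>))) {..<n}"
    and indep_Z_C: "\<forall>i<n. \<forall>A \<in> sets (borel \<Otimes>\<^sub>M borel).
                        measure M {\<omega> \<in> space M. Z i \<omega> \<and> (C1 i \<omega>, C0 i \<omega>) \<in> A}
                        = measure M {\<omega> \<in> space M. Z i \<omega>} * measure M {\<omega> \<in> space M. (C1 i \<omega>, C0 i \<omega>) \<in> A}"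
    and Z_bernoulli: "\<forall>i<n. measure M {\<omega> \<in> space M. Z i \<omega>} = p1"
    and C_ident: "\<forall>i<n. distr M (borel \<Otimes>\<^sub>M borel) (\<lambda>\<omega>. (C1 i \<omega>, C0 i \<omega>))
                       = distr M (borel \<Otimes>\<^sub>M borel) (\<lambda>\<omega>. (C1 0 \<omega>, C0 0 \<omega>))"
  shows "\<forall>t::real. 0 \<le> t \<longrightarrow> (\<forall>m k b j.
           \<P>(\<omega> in M. Nbar n T1 T0 (\<lambda>i. C1 i \<omega>) (\<lambda>i. C0 i \<omega>) (\<lambda>i. Z i \<omega>) t = m
                   \<and> Dbar n T1 T0 (\<lambda>i. C1 i \<omega>) (\<lambda>i. C0 i \<omega>) (\<lambda>i. Z i \<omega>) t = k
                   \<and> Nbar1 n T1 T0 (\<lambda>i. C1 i \<omega>) (\<lambda>i. C0 i \<omega>) (\<lambda>i. Z i \<omega>) t = b) > 0 \<longrightarrow>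
           \<P>(\<omega> in M. Dbar1 n T1 T0 (\<lambda>i. C1 i \<omega>) (\<lambda>i. C0 i \<omega>) (\<lambda>i. Z i \<omega>) t = j
                 \<bar> Nbar n T1 T0 (\<lambda>i. C1 i \<omega>) (\<lambda>i. C0 i \<omega>) (\<lambda>i. Z i \<omega>) t = m
                   \<and> Dbar n T1 T0 (\<lambda>i. C1 i \<omega>) (\<lambda>i. C0 i \<omega>) (\<lambda>i. Z i \<omega>) t = k
                   \<and> Nbar1 n T1 T0 (\<lambda>i. C1 i \<omega>) (\<lambda>i. C0 i \<omega>) (\<lambda>i. Z i \<omega>) t = b)
           = hgeom_pmf m k b j)"
  proof (intro allI impI)
  fix t :: real and m k b j :: nat
  assume pos: "\<P>(\<omega> in M. Nbar n T1 T0 (\<lambda>i. C1 i \<omega>) (\<lambda>i. C0 i \<omega>) (\<lambda>i. Z i \<omega>) t = m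
                   \<and> Dbar n T1 T0 (\<lambda>i. C1 i \<omega>) (\<lambda>i. C0 i \<omega>) (\<lambda>i. Z i \<omega>) t = k
                   \<and> Nbar1 n T1 T0 (\<lambda>i. C1 i \<omega>) (\<lambda>i. C0 i \<omega>) (\<lambda>i. Z i \<omega>) t = b) > 0"
  interpret S: thm_setup M n p1 T1 T0 Z C1 C0 t
    by (rule thm_setup.intro[OF M], rule thm_setup_axioms.intro[OF H0 indep_units indep_Z_C Z_bernoulli C_ident])
  show "\<P>(\<omega> in M. Dbar1 n T1 T0 (\<lambda>i. C1 i \<omega>) (\<lambda>i. C0 i \<omega>) (\<lambda>i. Z i \<omega>) t = j
                 \<bar> Nbar n T1 T0 (\<lambda>i. C1 i \<omega>) (\<lambda>i. C0 i \<omega>) (\<lambda>i. Z i \<omega>) t = m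
                   \<and> Dbar n T1 T0 (\<lambda>i. C1 i \<omega>) (\<lambda>i. C0 i \<omega>) (\<lambda>i. Z i \<omega>) t = k
                   \<and> Nbar1 n T1 T0 (\<lambda>i. C1 i \<omega>) (\<lambda>i. C0 i \<omega>) (\<lambda>i. Z i \<omega>) t = b)
           = hgeom_pmf m k b j"
    by (rule S.main[OF pos])
qed

end
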